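(* Let $G=(V,E)$ be a finite, undirected, unweighted, connected graph with $n=|V|$ vertices. If $P$ is a shortest walk in $G$ visiting every vertex at least once, then $n\le \mathrm{len}(P)\le 0.5n^2+0.5n$. If $C$ is a shortest closed walk in $G$ visiting every vertex at least once, then $n\le\mathrm{len}(C)\le 0.5n^2+1.5n-1$.
   Context: A walk in $G$ is a sequence $(u_1,\dots,u_h)$ of vertices with $\{u_t,u_{t+1}\}\in E$ for all $t$ (repetitions allowed), and its length is $\mathrm{len}(u_1,\dots,u_h)=h$, the number of entries counted with multiplicity. A closed walk is a walk with $u_1=u_h$. A shortest walk (resp. closed walk) visiting every vertex is one of minimum length among all walks (resp. closed walks) whose set of entries is $V$. *)

theory Defs
  imports Complex_Main
begin

definition simple_graph :: "'a set \<Rightarrow> ('a \<Rightarrow> 'a \<Rightarrow> bool) \<Rightarrow> bool" where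
  "simple_graph V E \<longleftrightarrow> finite V \<and> (\<forall>u v. E u v \<longrightarrow> E v u) \<and> (\<forall>u. \<not> E u u)
     \<and> (\<forall>u v. E u v \<longrightarrow> u \<in> V \<and> v \<in> V)"

text \<open>A walk (u_1,...,u_h), h \<ge> 1, with consecutive entries adjacent; length = h.\<close>
definition is_walk :: "('a \<Rightarrow> 'a \<Rightarrow> bool) \<Rightarrow> 'a list \<Rightarrow> bool" where
  "is_walk E w \<longleftrightarrow> w \<noteq> [] \<and> (\<forall>t. Suc t < length w \<longrightarrow> E (w ! t) (w ! Suc t))"

definition is_closed_walk :: "('a \<Rightarrow> 'a \<Rightarrow> bool) \<Rightarrow> 'a list \<Rightarrow> bool" where
  "is_closed_walk E w \<longleftrightarrow> is_walk E w \<and> hd w = last w"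

definition connected_graph :: "'a set \<Rightarrow> ('a \<Rightarrow> 'a \<Rightarrow> bool) \<Rightarrow> bool" where
  "connected_graph V E \<longleftrightarrow> V \<noteq> {} \<and>
     (\<forall>u\<in>V. \<forall>v\<in>V. \<exists>w. is_walk E w \<and> hd w = u \<and> last w = v)"

definition shortest_covering_walk :: "'a set \<Rightarrow> ('a \<Rightarrow> 'a \<Rightarrow> bool) \<Rightarrow> 'a list \<Rightarrow> bool" where
  "shortest_covering_walk V E P \<longleftrightarrow> is_walk E P \<and> set P = V \<and>
     (\<forall>w. is_walk E w \<and> set w = V \<longrightarrow> length P \<le> length w)"

definition shortest_covering_closed_walk :: "'a set \<Rightarrow> ('a \<Rightarrow> 'a \<Rightarrow> bool) \<Rightarrow> 'a list \<Rightarrow> bool" where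
  "shortest_covering_closed_walk V E C \<longleftrightarrow> is_closed_walk E C \<and> set C = V \<and>
     (\<forall>w. is_closed_walk E w \<and> set w = V \<longrightarrow> length C \<le> length w)"

end

theory Submission
  imports Defs
begin

lemma walk_iff: "is_walk E w \<longleftrightarrow> w \<noteq> [] \<and> successively E w"
  unfolding is_walk_def successively_conv_nth by auto

lemma prefix_out:
  "successively E w \<Longrightarrow> w \<noteq> [] \<Longrightarrow> last w \<notin> S \<Longrightarrow>
   \<exists>p. p \<noteq> [] \<and> successively E p \<and> hd p = hd w \<and> last p \<notin> S \<and> set (butlast p) \<subseteq> S"
proof (induction w)
  case Nil then show ?case by simp
next
  case (Cons x w')
  show ?case
  proof (cases "x \<in> S")
    case False
    then show ?thesis by (intro exI[of _ "[x]"]) auto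
  next
    case True
    then have ne: "w' \<noteq> []" using Cons.prems by auto
    have s: "successively E w'" "E x (hd w')" using Cons.prems ne by (auto simp: successively_Cons)
    obtain p' where p': "p' \<noteq> []" "successively E p'" "hd p' = hd w'" "last p' \<notin> S"
       "set (butlast p') \<subseteq> S"
      using Cons.IH[OF s(1) ne] Cons.prems ne by auto
    show ?thesis
      by (intro exI[of _ "x # p'"]) (use p' s True in \<open>auto simp: successively_Cons\<close>)
  qed
qed

lemma distinct_out:
  "successively E p \<Longrightarrow> p \<noteq> [] \<Longrightarrow> last p \<notin> S \<Longrightarrow> set (butlast p) \<subseteq> S \<Longrightarrow>
   \<exists>q. q \<noteq> [] \<and> successively E q \<and> hd q = hd p \<and> last q = last p \<and> set (butlast q) \<subseteq> S \<and> distinct q"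
proof (induction "length p" arbitrary: p rule: less_induct)
  case less
  show ?case
  proof (cases "distinct p")
    case True then show ?thesis using less.prems by blast
  next
    case False
    then obtain xs ys zs y where p: "p = xs@[y]@ys@[y]@zs" using not_distinct_decomp by blast
    let ?q = "xs@[y]@zs"
    have len: "length ?q < length p" using p by simp
    have s1: "successively E ?q" using less.prems(1) unfolding p
      by (auto simp: successively_append_iff successively_Cons)
    have h: "hd ?q = hd p" using p by (cases xs) auto
    have l: "last ?q = last p" using p by (cases zs) auto
    have b: "set (butlast ?q) \<subseteq> S" using less.prems(4) unfolding p
      by (cases zs) (auto simp: butlast_append)
    obtain q where "q \<noteq> [] \<and> successively E q \<and> hd q = hd ?q \<and> last q = last ?q \<and> set (butlast q) \<subseteq> S \<and> distinct q"
      using less.hyps[OF len s1 _ _ b] less.prems l by fastforce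
    then show ?thesis using h l by metis
  qed
qed

lemma path_out:
  assumes "successively E w" "w \<noteq> []" "last w \<notin> S" "finite S"
  shows "\<exists>p. p \<noteq> [] \<and> successively E p \<and> hd p = hd w \<and> last p \<notin> S \<and> length p \<le> card S + 1"
proof -
  obtain p where p: "p \<noteq> []" "successively E p" "hd p = hd w" "last p \<notin> S" "set (butlast p) \<subseteq> S"
    using prefix_out[OF assms(1-3)] by blast
  obtain q where q: "q \<noteq> []" "successively E q" "hd q = hd p" "last q = last p"
     "set (butlast q) \<subseteq> S" "distinct q"
    using distinct_out[OF p(2,1,4,5)] by blast
  have "length (butlast q) = card (set (butlast q))"
    using q(6) by (simp add: distinct_card distinct_butlast)
  also have "\<dots> \<le> card S" using card_mono[OF assms(4) q(5)] .
  finally have "length q \<le> card S + 1" by simp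
  then show ?thesis using q p by auto
qed

lemma walk_in_V:
  assumes "simple_graph V E"
  shows "successively E p \<Longrightarrow> p \<noteq> [] \<Longrightarrow> hd p \<in> V \<Longrightarrow> set p \<subseteq> V"
proof (induction p)
  case Nil then show ?case by simp
next
  case (Cons x p)
  then show ?case using assms unfolding simple_graph_def
    by (cases p) (auto simp: successively_Cons)
qed

lemma cover:
  assumes G: "simple_graph V E" and C: "connected_graph V E"
  shows "successively E w \<Longrightarrow> w \<noteq> [] \<Longrightarrow> set w \<subseteq> V \<Longrightarrow>
    2 * length w \<le> 2 + card (set w) * (card (set w) - 1) \<Longrightarrow>
    \<exists>w'. w' \<noteq> [] \<and> successively E w' \<and> set w' = V \<and> hd w' = hd w \<and>
       2 * length w' \<le> 2 + card V * (card V - 1)"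
proof (induction "card V - card (set w)" arbitrary: w rule: less_induct)
  case less
  have fV: "finite V" using G unfolding simple_graph_def by simp
  show ?case
  proof (cases "set w = V")
    case True then show ?thesis using less.prems by blast
  next
    case False
    then obtain x where x: "x \<in> V" "x \<notin> set w" using less.prems(3) by blast
    have "last w \<in> V" using less.prems by auto
    then obtain u where u: "is_walk E u" "hd u = last w" "last u = x"
      using C x unfolding connected_graph_def by blast
    let ?k = "card (set w)"
    obtain p where p: "p \<noteq> []" "successively E p" "hd p = last w" "last p \<notin> set w"
        "length p \<le> ?k + 1"
      using path_out[of E u "set w"] u x by (auto simp: walk_iff)
    have pV: "set p \<subseteq> V" using walk_in_V[OF G p(2,1)] p(3) \<open>last w \<in> V\<close> by simp
    have tl: "tl p \<noteq> []" using p less.prems(2) by (cases p) auto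
    have pe: "p = last w # tl p" using p(1,3) by (cases p) auto
    let ?w = "w @ tl p"
    have s: "successively E ?w"
      using less.prems(1) p(2) tl pe unfolding successively_append_iff
      by (metis successively_Cons)
    have lp: "last p \<in> set (tl p)" using tl pe by (metis last_ConsR last_in_set)
    have sub: "insert (last p) (set w) \<subseteq> set ?w" using lp by auto
    have swV: "set ?w \<subseteq> V" using less.prems(3) pV by (auto dest: list.set_sel(2)[OF p(1)])
    have k': "?k + 1 \<le> card (set ?w)"
      using card_mono[OF _ sub] p(4) by simp
    let ?k' = "card (set ?w)"
    have "2 * length ?w = 2 * length w + 2 * (length p - 1)" by simp
    also have "\<dots> \<le> 2 + ?k * (?k - 1) + 2 * ?k" using less.prems(4) p(5) by simp
    also have "\<dots> = 2 + (?k + 1) * ?k" by (cases ?k) (auto simp: algebra_simps)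
    also have "\<dots> \<le> 2 + ?k' * (?k' - 1)" using k' by (intro add_left_mono mult_mono) auto
    finally have len: "2 * length ?w \<le> 2 + ?k' * (?k' - 1)" .
    have cV: "?k' \<le> card V" using card_mono[OF fV swV] .
    have lt: "card V - ?k' < card V - ?k" using k' cV by simp
    obtain w' where "w' \<noteq> [] \<and> successively E w' \<and> set w' = V \<and> hd w' = hd ?w \<and>
       2 * length w' \<le> 2 + card V * (card V - 1)"
      using less.hyps[OF lt s _ swV len] less.prems(2) by auto
    then show ?thesis using less.prems(2) by auto
  qed
qed

lemma real_bound:
  fixes L n :: nat
  assumes "2 * L \<le> 2 + n * (n - 1) + m" "1 \<le> n"
  shows "2 * real L \<le> 2 + real n * (real n - 1) + real m"
proof -
  have "real (2 * L) \<le> real (2 + n * (n - 1) + m)" using assms(1) by (simp only: of_nat_le_iff)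
  then show ?thesis using assms(2) by (simp add: of_nat_diff)
qed

theorem lemma3:
  fixes V :: "'a set" and E :: "'a \<Rightarrow> 'a \<Rightarrow> bool"
  assumes "simple_graph V E" and "connected_graph V E"
  shows "(\<forall>P. shortest_covering_walk V E P \<longrightarrow>
            card V \<le> length P \<and> real (length P) \<le> 0.5 * real (card V)^2 + 0.5 * real (card V))
       \<and> (\<forall>C. shortest_covering_closed_walk V E C \<longrightarrow>
            card V \<le> length C \<and> real (length C) \<le> 0.5 * real (card V)^2 + 1.5 * real (card V) - 1)"
proof -
  have fV: "finite V" using assms(1) simple_graph_def by blast
  have "V \<noteq> {}" using assms(2) unfolding connected_graph_def by simp
  then obtain v where v: "v \<in> V" by blast
  have n1: "1 \<le> card V" using fV v card_gt_0_iff by (metis One_nat_def Suc_leI empty_iff)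
  obtain w where w: "w \<noteq> []" "successively E w" "set w = V" "hd w = v"
       "2 * length w \<le> 2 + card V * (card V - 1)"
  proof -
    have "successively E [v]" "[v] \<noteq> []" "set [v] \<subseteq> V"
      "2 * length [v] \<le> 2 + card (set [v]) * (card (set [v]) - 1)" using v by auto
    from cover[OF assms this] show ?thesis using that by auto
  qed
  have ww: "is_walk E w" using w by (simp add: walk_iff)
  obtain c where c: "is_closed_walk E c" "set c = V" "2 * length c \<le> 2 + card V * (card V - 1) + 2 * (card V - 1)"
  proof (cases "last w = v")
    case True
    then show ?thesis using that[of w] ww w by (auto simp: is_closed_walk_def)
  next
    case False
    have "last w \<in> V" using w by auto
    then obtain u where u: "is_walk E u" "hd u = last w" "last u = v"
      using assms(2) v unfolding connected_graph_def by blast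
    obtain p where p: "p \<noteq> []" "successively E p" "hd p = last w" "last p \<notin> V - {v}"
        "length p \<le> card (V - {v}) + 1"
      using path_out[of E u "V - {v}"] u fV by (auto simp: walk_iff)
    have pV: "set p \<subseteq> V" using walk_in_V[OF assms(1) p(2,1)] p(3) \<open>last w \<in> V\<close> by simp
    have lp: "last p = v" using pV p(1,4) last_in_set by blast
    have tl: "tl p \<noteq> []" using p lp False by (cases p) auto
    have pe: "p = last w # tl p" using p(1,3) by (cases p) auto
    let ?c = "w @ tl p"
    have s: "successively E ?c"
      using w(2) p(2) tl pe unfolding successively_append_iff
      by (metis successively_Cons)
    have lc: "last ?c = v" using tl lp pe by (metis last_ConsR last_appendR)
    have hc: "hd ?c = v" using w by simp
    have sc: "set ?c = V" using w(3) pV by (auto dest: list.set_sel(2)[OF p(1)])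
    have "card (V - {v}) = card V - 1" using v fV by simp
    then have lenc: "2 * length ?c \<le> 2 + card V * (card V - 1) + 2 * (card V - 1)"
      using w(5) p(5) by simp
    have cw: "is_closed_walk E ?c" using s lc hc w(1) by (simp add: is_closed_walk_def walk_iff)
    show ?thesis by (rule that[OF cw sc lenc])
  qed
  show ?thesis
  proof (intro conjI allI impI)
    fix P assume P: "shortest_covering_walk V E P"
    then show "card V \<le> length P" unfolding shortest_covering_walk_def
      by (metis card_length)
    have "length P \<le> length w" using P ww w(3) unfolding shortest_covering_walk_def by blast
    then have "2 * length P \<le> 2 + card V * (card V - 1) + 0" using w(5) by simp
    from real_bound[OF this n1]
    have a: "2 * real (length P) \<le> 2 + real (card V) * (real (card V) - 1)" by simp
    have e: "real (card V) * (real (card V) - 1) = (real (card V))^2 - real (card V)"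
      by (simp add: power2_eq_square right_diff_distrib)
    have "1 \<le> real (card V)" using n1 by simp
    then show "real (length P) \<le> 0.5 * real (card V)^2 + 0.5 * real (card V)"
      using a e by linarith
  next
    fix P assume P: "shortest_covering_closed_walk V E P"
    then show "card V \<le> length P" unfolding shortest_covering_closed_walk_def
      by (metis card_length)
    have "length P \<le> length c" using P c unfolding shortest_covering_closed_walk_def by blast
    then have "2 * length P \<le> 2 + card V * (card V - 1) + 2 * (card V - 1)" using c(3) by simp
    from real_bound[OF this n1]
    have a: "2 * real (length P) \<le> 2 + real (card V) * (real (card V) - 1) + real (2 * (card V - 1))" .
    have r: "real (2 * (card V - 1)) = 2 * real (card V) - 2" using n1 by (simp add: of_nat_diff)
    have e: "real (card V) * (real (card V) - 1) = (real (card V))^2 - real (card V)"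
      by (simp add: power2_eq_square right_diff_distrib)
    show "real (length P) \<le> 0.5 * real (card V)^2 + 1.5 * real (card V) - 1"
      using a e r by linarith
  qed
qed

end
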